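(* Let $\alpha\in\mathbb R$ and let $(\phi,\psi)$ be a $q\times q$ Stieltjes pair. Then there is a discrete subset $\mathcal D$ of $\mathbb C\setminus[\alpha,\infty)$ satisfying conditions (i), (ii), (iii) of the definition of a Stieltjes pair and additionally: (iv) $\frac1{\operatorname{Im}z}\operatorname{Im}[\psi(z)^*\phi(z)]$ is positive semidefinite for each $z\in\mathbb C\setminus(\mathbb R\cup\mathcal D)$; (v) $\frac1{\operatorname{Im}z}\operatorname{Im}[(z-\alpha)\psi(z)^*\phi(z)]$ is positive semidefinite for each $z\in\mathbb C\setminus(\mathbb R\cup\mathcal D)$; (vi) $\operatorname{Re}[\psi(z)^*\phi(z)]$ is positive semidefinite for each $z\in\{w\in\mathbb C:\operatorname{Re}w<\alpha\}\setminus\mathcal D$.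
   Context: For a square matrix $A$, $\operatorname{Re}A:=\frac12(A+A^* )$, $\operatorname{Im}A:=\frac1{2i}(A-A^* )$. $J_q:=\begin{pmatrix}0&-iI_q\\ iI_q&0\end{pmatrix}$. A pair $(\phi,\psi)$ of $q\times q$ matrix-valued functions meromorphic in $\mathbb C\setminus[\alpha,\infty)$ is a $q\times q$ Stieltjes pair if there is a discrete subset $\mathcal D$ of $\mathbb C\setminus[\alpha,\infty)$ such that: (i) $\phi,\psi$ are holomorphic in $\mathbb C\setminus([\alpha,\infty)\cup\mathcal D)$; (ii) $\operatorname{rank}\begin{pmatrix}\phi(z)\\\psi(z)\end{pmatrix}=q$ there; (iii) for each $z\in\mathbb C\setminus(\mathbb R\cup\mathcal D)$, $\begin{pmatrix}\phi(z)\\\psi(z)\end{pmatrix}^*\frac{-J_q}{2\operatorname{Im}z}\begin{pmatrix}\phi(z)\\\psi(z)\end{pmatrix}$ and $\begin{pmatrix}(z-\alpha)\phi(z)\\\psi(z)\end{pmatrix}^*\frac{-J_q}{2\operatorname{Im}z}\begin{pmatrix}(z-\alpha)\phi(z)\\\psi(z)\end{pmatrix}$ are positive semidefinite. *)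

theory Defs
  imports "HOL-Complex_Analysis.Complex_Analysis"
begin

text \<open>Square/rectangular complex matrices are rendered as HOL-Analysis Cartesian
  matrices; the size q is the cardinality of the finite index type.\<close>

definition adj :: "complex^'n^'m \<Rightarrow> complex^'m^'n" where
  "adj A = (\<chi> i j. cnj (A $ j $ i))"

definition smat :: "complex \<Rightarrow> complex^'n^'m \<Rightarrow> complex^'n^'m" where
  "smat c A = (\<chi> i j. c * A $ i $ j)"

definition mRe :: "complex^'n^'n \<Rightarrow> complex^'n^'n" where
  "mRe A = smat (1/2) (A + adj A)"

definition mIm :: "complex^'n^'n \<Rightarrow> complex^'n^'n" where
  "mIm A = smat (1/(2*\<i>)) (A - adj A)"

definition psd :: "complex^'n^'n \<Rightarrow> bool" where
  "psd A \<longleftrightarrow> (\<forall>x::complex^'n.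
     (let v = (\<Sum>i\<in>UNIV. \<Sum>j\<in>UNIV. cnj (x $ i) * A $ i $ j * x $ j)
      in v \<in> \<real> \<and> Re v \<ge> 0))"

text \<open>J_q = [[0, -i I_q],[i I_q, 0]] indexed by 'q + 'q (Inl = first block).\<close>
definition Jmat :: "complex^('q::finite + 'q)^('q + 'q)" where
  "Jmat = (\<chi> a b. case (a, b) of
      (Inl i, Inr j) \<Rightarrow> (if i = j then -\<i> else 0)
    | (Inr i, Inl j) \<Rightarrow> (if i = j then \<i> else 0)
    | _ \<Rightarrow> 0)"

definition stack :: "complex^'q^'q \<Rightarrow> complex^'q^'q \<Rightarrow> complex^'q^('q + 'q)" where
  "stack A B = (\<chi> a j. case a of Inl i \<Rightarrow> A $ i $ j | Inr i \<Rightarrow> B $ i $ j)"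

definition slit :: "real \<Rightarrow> complex set" where
  "slit \<alpha> = - {complex_of_real t | t. t \<ge> \<alpha>}"

definition discrete_in :: "complex set \<Rightarrow> complex set \<Rightarrow> bool" where
  "discrete_in D \<Omega> \<longleftrightarrow> D \<subseteq> \<Omega> \<and> D sparse_in \<Omega>"

definition mat_meromorphic_on :: "(complex \<Rightarrow> complex^'n^'m) \<Rightarrow> complex set \<Rightarrow> bool" where
  "mat_meromorphic_on F S \<longleftrightarrow> (\<forall>i j. (\<lambda>z. F z $ i $ j) meromorphic_on S)"

definition mat_holomorphic_on :: "(complex \<Rightarrow> complex^'n^'m) \<Rightarrow> complex set \<Rightarrow> bool" where
  "mat_holomorphic_on F S \<longleftrightarrow> (\<forall>i j. (\<lambda>z. F z $ i $ j) holomorphic_on S)"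

definition stieltjes_conds ::
  "real \<Rightarrow> (complex \<Rightarrow> complex^'q^'q) \<Rightarrow> (complex \<Rightarrow> complex^'q^'q) \<Rightarrow> complex set \<Rightarrow> bool" where
  "stieltjes_conds \<alpha> \<phi> \<psi> D \<longleftrightarrow>
     discrete_in D (slit \<alpha>) \<and>
     mat_holomorphic_on \<phi> (slit \<alpha> - D) \<and> mat_holomorphic_on \<psi> (slit \<alpha> - D) \<and>
     (\<forall>z \<in> slit \<alpha> - D. rank (stack (\<phi> z) (\<psi> z)) = CARD('q)) \<and>
     (\<forall>z. z \<notin> \<real> \<and> z \<notin> D \<longrightarrow>
        psd (smat (1 / complex_of_real (2 * Im z))
               (adj (stack (\<phi> z) (\<psi> z)) ** (- Jmat) ** stack (\<phi> z) (\<psi> z))) \<and>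
        psd (smat (1 / complex_of_real (2 * Im z))
               (adj (stack (smat (z - of_real \<alpha>) (\<phi> z)) (\<psi> z)) ** (- Jmat)
                  ** stack (smat (z - of_real \<alpha>) (\<phi> z)) (\<psi> z))))"

definition stieltjes_pair ::
  "real \<Rightarrow> (complex \<Rightarrow> complex^'q^'q) \<Rightarrow> (complex \<Rightarrow> complex^'q^'q) \<Rightarrow> bool" where
  "stieltjes_pair \<alpha> \<phi> \<psi> \<longleftrightarrow>
     mat_meromorphic_on \<phi> (slit \<alpha>) \<and> mat_meromorphic_on \<psi> (slit \<alpha>) \<and>
     (\<exists>D. stieltjes_conds \<alpha> \<phi> \<psi> D)"

end

theory Submission
  imports Defs
begin

lemma sum_UNIV_Plus:
  fixes f :: "('a::finite + 'b::finite) \<Rightarrow> 'c::comm_monoid_add"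
  shows "(\<Sum>a\<in>UNIV. f a) = (\<Sum>i\<in>UNIV. f (Inl i)) + (\<Sum>i\<in>UNIV. f (Inr i))"
  by (simp add: UNIV_Plus_UNIV[symmetric] sum.Plus o_def del: UNIV_Plus_UNIV)

lemma mm_entry: "((X::'a::semiring_1^'n^'m) ** (M::'a^'k^'n)) $ i $ j = (\<Sum>a\<in>UNIV. X$i$a * M$a$j)"
  by (simp add: matrix_matrix_mult_def)

lemma J_stack:
  fixes A B :: "complex^'q::finite^'q"
  shows "adj (stack A B) ** (- Jmat) ** stack A B = smat 2 (mIm (adj B ** A))"
proof -
  have inner: "((- Jmat) ** stack A B) $ a $ j =
      (case a of Inl k \<Rightarrow> \<i> * B $ k $ j | Inr k \<Rightarrow> - \<i> * A $ k $ j)" for a j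
    by (cases a) (simp_all add: matrix_matrix_mult_def Jmat_def stack_def sum_UNIV_Plus
          if_distrib[of "\<lambda>x. x * _"] sum_negf if_distrib[of uminus] cong: if_cong)
  have "(adj (stack A B) ** ((- Jmat) ** stack A B)) $ i $ j = (smat 2 (mIm (adj B ** A))) $ i $ j" for i j
    apply (subst mm_entry)
    apply (simp only: inner sum_UNIV_Plus sum.case)
    apply (simp add: adj_def stack_def smat_def mIm_def mm_entry sum_subtractf sum_negf
       sum_distrib_left algebra_simps)
    done
  then show ?thesis
    by (simp add: vec_eq_iff matrix_mul_assoc)
qed

lemma smat_smat: "smat a (smat b M) = smat (a*b) M"
  by (simp add: smat_def vec_eq_iff)

lemma mult_smat: "(X::complex^'n^'m) ** smat c (Y::complex^'k^'n) = smat c (X ** Y)"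
  by (simp add: smat_def vec_eq_iff mm_entry sum_distrib_left algebra_simps)

definition qf :: "complex^'n^'n \<Rightarrow> complex^'n \<Rightarrow> complex" where
  "qf A x = (\<Sum>i\<in>UNIV. \<Sum>j\<in>UNIV. cnj (x $ i) * A $ i $ j * x $ j)"

lemma psd_qf: "psd A \<longleftrightarrow> (\<forall>x. qf A x \<in> \<real> \<and> Re (qf A x) \<ge> 0)"
  by (simp add: psd_def qf_def Let_def)

lemma cond_iv:
  fixes A B :: "complex^'q::finite^'q"
  shows "smat (1 / complex_of_real (2 * t)) (adj (stack A B) ** (- Jmat) ** stack A B)
     = smat (1 / complex_of_real t) (mIm (adj B ** A))"
  by (simp add: J_stack smat_smat)

lemma cond_v:
  fixes A B :: "complex^'q::finite^'q"
  shows "smat (1 / complex_of_real (2 * t)) (adj (stack (smat c A) B) ** (- Jmat) ** stack (smat c A) B)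
     = smat (1 / complex_of_real t) (mIm (smat c (adj B ** A)))"
  by (simp add: J_stack smat_smat mult_smat)

lemma entry_id:
  fixes u v w :: complex
  assumes "Im w \<noteq> 0"
  shows "1/2 * (u + cnj v) = 1 / of_real (Im w) * (1 / (2*\<i>) * (w*u - cnj w * cnj v))
     + of_real (- Re w) * (1 / of_real (Im w) * (1/(2*\<i>) * (u - cnj v)))"
proof -
  obtain a b where w: "w = Complex a b" by (cases w)
  have "b \<noteq> 0" using assms w by simp
  then show ?thesis unfolding w
    by (simp add: complex_eq_iff field_simps)
qed

lemma vi_nonreal:
  fixes A :: "complex^'q::finite^'q"
  assumes "Im z \<noteq> 0" "Re z < \<alpha>"
    and P: "psd (smat (1 / complex_of_real (Im z)) (mIm A))"
    and Q: "psd (smat (1 / complex_of_real (Im z)) (mIm (smat (z - of_real \<alpha>) A)))"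
  shows "psd (mRe A)"
proof -
  let ?P = "smat (1 / complex_of_real (Im z)) (mIm A)"
  let ?Q = "smat (1 / complex_of_real (Im z)) (mIm (smat (z - of_real \<alpha>) A))"
  define c where "c = \<alpha> - Re z"
  have c: "c > 0" using assms c_def by simp
  have eq: "mRe A = ?Q + smat (of_real c) ?P"
  proof -
    have "mRe A $ i $ j = (?Q + smat (of_real c) ?P) $ i $ j" for i j
      using entry_id[of "z - of_real \<alpha>" "A$i$j" "A$j$i"] assms(1)
      by (simp add: mRe_def mIm_def smat_def adj_def c_def)
    then show ?thesis by (simp add: vec_eq_iff)
  qed
  have qfadd: "qf (?Q + smat (of_real c) ?P) x = qf ?Q x + of_real c * qf ?P x" for x
    by (simp add: qf_def smat_def sum.distrib sum_distrib_left algebra_simps)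
  show ?thesis
    unfolding psd_qf eq qfadd
  proof
    fix x
    have "qf ?Q x \<in> \<real>" "Re (qf ?Q x) \<ge> 0" "qf ?P x \<in> \<real>" "Re (qf ?P x) \<ge> 0"
      using P Q unfolding psd_qf by auto
    then show "qf ?Q x + of_real c * qf ?P x \<in> \<real> \<and> 0 \<le> Re (qf ?Q x + of_real c * qf ?P x)"
      using c by (auto simp: complex_is_Real_iff)
  qed
qed

lemma open_slit: "open (slit \<alpha>)"
proof -
  have "{complex_of_real t | t. t \<ge> \<alpha>} = \<real> \<inter> {z. Re z \<ge> \<alpha>}"
    by (auto elim!: Reals_cases)
  then show ?thesis
    unfolding slit_def by (metis open_Compl closed_Int closed_complex_Reals closed_halfspace_Re_ge)
qed

lemma main_vi:
  fixes \<phi> \<psi> :: "complex \<Rightarrow> complex^'q::finite^'q"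
  assumes C: "stieltjes_conds \<alpha> \<phi> \<psi> D"
    and nonreal: "\<And>z. z \<notin> \<real> \<Longrightarrow> z \<notin> D \<Longrightarrow> Re z < \<alpha> \<Longrightarrow> psd (mRe (adj (\<psi> z) ** \<phi> z))"
    and x: "Re x < \<alpha>" "x \<notin> D"
  shows "psd (mRe (adj (\<psi> x) ** \<phi> x))"
proof (cases "x \<in> \<real>")
  case False then show ?thesis using nonreal x by blast
next
  case True
  have xs: "x \<in> slit \<alpha>" using x(1) by (auto simp: slit_def)
  have sp: "D sparse_in slit \<alpha>" using C by (simp add: stieltjes_conds_def discrete_in_def)
  have "\<not> x islimpt D" using sparse_in_open[OF open_slit] sp xs by blast
  then obtain T where T: "x \<in> T" "open T" "\<And>y. y \<in> D \<Longrightarrow> y \<in> T \<Longrightarrow> y = x"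
    unfolding islimpt_def by blast
  obtain e where e: "e > 0" "ball x e \<subseteq> T \<inter> slit \<alpha>"
    using open_contains_ball[of "T \<inter> slit \<alpha>"] T(1,2) xs open_slit by (meson IntI open_Int)
  have ballD: "ball x e \<subseteq> slit \<alpha> - D" using e T(3) x(2) by blast
  have contE: "isCont (\<lambda>z. F z $ i $ j) x" if "mat_holomorphic_on F (slit \<alpha> - D)" for F :: "complex \<Rightarrow> complex^'q^'q" and i j
  proof -
    have "(\<lambda>z. F z $ i $ j) holomorphic_on ball x e"
      using that ballD unfolding mat_holomorphic_on_def by (meson holomorphic_on_subset)
    then have "continuous_on (ball x e) (\<lambda>z. F z $ i $ j)"
      by (rule holomorphic_on_imp_continuous_on)
    then show ?thesis using e(1) by (meson centre_in_ball continuous_on_eq_continuous_at open_ball)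
  qed
  have cphi: "\<And>i j. isCont (\<lambda>z. \<phi> z $ i $ j) x" and cpsi: "\<And>i j. isCont (\<lambda>z. \<psi> z $ i $ j) x"
    using contE C by (auto simp: stieltjes_conds_def)
  show ?thesis unfolding psd_qf
  proof
    fix v
    define f where "f z = qf (mRe (adj (\<psi> z) ** \<phi> z)) v" for z
    have fc: "isCont f x"
      unfolding f_def qf_def mRe_def smat_def adj_def mm_entry
      by (simp add: cphi cpsi mm_entry continuous_intros)
    define s where "s n = x + (\<i> * of_real (e/2)) / of_nat (Suc n)" for n
    have st: "s \<longlonglongrightarrow> x"
    proof -
      have "(\<lambda>n. (\<i> * of_real (e/2)) / of_nat (Suc n)) \<longlonglongrightarrow> (0::complex)"
        using LIMSEQ_Suc[OF lim_const_over_n[of "\<i> * of_real (e/2)"]] by simp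
      from tendsto_add[OF tendsto_const[of x] this] show ?thesis unfolding s_def by simp
    qed
    have Ims: "Im (s n) = e / 2 / real (Suc n)" for n
      using True by (simp add: s_def complex_is_Real_iff Im_divide_of_nat)
    have sball: "s n \<in> ball x e" for n
    proof -
      have "dist x (s n) = e / 2 / real (Suc n)"
        using e(1) by (simp add: s_def dist_norm norm_divide norm_mult norm_of_nat del: of_nat_Suc)
      also have "\<dots> < e" using e(1) by (simp add: field_simps add_pos_nonneg)
      finally show ?thesis by simp
    qed
    have fs: "f (s n) \<in> \<real> \<and> Re (f (s n)) \<ge> 0" for n
    proof -
      have "s n \<notin> \<real>" using Ims[of n] e(1) by (simp add: complex_is_Real_iff)
      moreover have "s n \<notin> D" using sball[of n] ballD by blast
      moreover have "Re (s n) < \<alpha>" using x(1) by (simp add: s_def Re_divide_of_nat)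
      ultimately show ?thesis using nonreal unfolding psd_qf f_def by blast
    qed
    have ft: "(\<lambda>n. f (s n)) \<longlonglongrightarrow> f x" using isCont_tendsto_compose[OF fc st] .
    have "(\<lambda>n. Im (f (s n))) \<longlonglongrightarrow> Im (f x)" using tendsto_Im[OF ft] .
    moreover have "(\<lambda>n. Im (f (s n))) = (\<lambda>n. 0)" using fs by (simp add: complex_is_Real_iff)
    ultimately have "Im (f x) = 0" using LIMSEQ_unique tendsto_const by metis
    moreover have "Re (f x) \<ge> 0"
      using LIMSEQ_le_const[OF tendsto_Re[OF ft]] fs by blast
    ultimately show "qf (mRe (adj (\<psi> x) ** \<phi> x)) v \<in> \<real> \<and> 0 \<le> Re (qf (mRe (adj (\<psi> x) ** \<phi> x)) v)"
      unfolding f_def by (simp add: complex_is_Real_iff)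
  qed
qed

theorem lemma10p13:
  fixes \<alpha> :: real and \<phi> \<psi> :: "complex \<Rightarrow> complex^'q^'q"
  assumes "stieltjes_pair \<alpha> \<phi> \<psi>"
  shows "\<exists>D. stieltjes_conds \<alpha> \<phi> \<psi> D \<and>
    (\<forall>z. z \<notin> \<real> \<and> z \<notin> D \<longrightarrow>
       psd (smat (1 / complex_of_real (Im z)) (mIm (adj (\<psi> z) ** \<phi> z)))) \<and>
    (\<forall>z. z \<notin> \<real> \<and> z \<notin> D \<longrightarrow>
       psd (smat (1 / complex_of_real (Im z))
              (mIm (smat (z - of_real \<alpha>) (adj (\<psi> z) ** \<phi> z))))) \<and>
    (\<forall>z. Re z < \<alpha> \<and> z \<notin> D \<longrightarrow> psd (mRe (adj (\<psi> z) ** \<phi> z)))"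
proof -
  obtain D where C: "stieltjes_conds \<alpha> \<phi> \<psi> D"
    using assms unfolding stieltjes_pair_def by blast
  have iv: "psd (smat (1 / complex_of_real (Im z)) (mIm (adj (\<psi> z) ** \<phi> z)))"
    if "z \<notin> \<real>" "z \<notin> D" for z
    using C that unfolding stieltjes_conds_def cond_iv by blast
  have v: "psd (smat (1 / complex_of_real (Im z)) (mIm (smat (z - of_real \<alpha>) (adj (\<psi> z) ** \<phi> z))))"
    if "z \<notin> \<real>" "z \<notin> D" for z
    using C that unfolding stieltjes_conds_def cond_v by blast
  have nr: "psd (mRe (adj (\<psi> z) ** \<phi> z))" if "z \<notin> \<real>" "z \<notin> D" "Re z < \<alpha>" for z
    using vi_nonreal[OF _ that(3) iv[OF that(1,2)] v[OF that(1,2)]] that(1)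
    by (simp add: complex_is_Real_iff)
  show ?thesis
    using C iv v main_vi[OF C nr] by blast
qed

end
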